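(* Let $M$ be a complete metric space and let $C^*(M)$ denote the normed space of all bounded continuous $\mathbb{K}$-valued functions on $M$ (where $\mathbb{K}=\mathbb{R}$ or $\mathbb{C}$), equipped with the supremum norm. If $C^*(M)$ admits an isometric shift, then $M$ is separable.
   Context: For a normed space $\mathcal{K}$, a map $T:\mathcal{K}\to\mathcal{K}$ is an (isometric) shift operator if (1) $T$ is a linear isometry, (2) the range $T(\mathcal{K})$ has codimension $1$ in $\mathcal{K}$, and (3) $\bigcap_{n=1}^{\infty} T^n(\mathcal{K})=\{0\}$. *)

theory Defs
  imports "HOL-Analysis.Analysis"
begin

definition scaleK_bcontfun :: "'k::real_normed_field \<Rightarrow> ('a::topological_space \<Rightarrow>\<^sub>C 'k) \<Rightarrow> ('a \<Rightarrow>\<^sub>C 'k)" where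
  "scaleK_bcontfun c f = Bcontfun (\<lambda>x. c * apply_bcontfun f x)"

definition isometric_shift :: "(('a::topological_space \<Rightarrow>\<^sub>C 'k::real_normed_field) \<Rightarrow> ('a \<Rightarrow>\<^sub>C 'k)) \<Rightarrow> bool" where
  "isometric_shift T \<longleftrightarrow>
     (\<forall>f g. T (f + g) = T f + T g) \<and>
     (\<forall>c f. T (scaleK_bcontfun c f) = scaleK_bcontfun c (T f)) \<and>
     (\<forall>f. norm (T f) = norm f) \<and>
     (\<exists>g. g \<notin> range T \<and> (\<forall>f. \<exists>h c. f = T h + scaleK_bcontfun c g)) \<and>
     (\<Inter>n\<in>{1..}. range (T ^^ n)) = {0}"

end

theory Submission
  imports Defs
begin


lemma sep_maximal:
  fixes e :: real
  assumes "e > 0"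
  shows "\<exists>D::'a::metric_space set. (\<forall>x\<in>D. \<forall>x'\<in>D. x \<noteq> x' \<longrightarrow> e \<le> dist x x') \<and> (\<forall>y. \<exists>x\<in>D. dist x y < e)"
proof -
  define A where "A = {D::'a set. \<forall>x\<in>D. \<forall>x'\<in>D. x \<noteq> x' \<longrightarrow> e \<le> dist x x'}"
  have "\<exists>M\<in>A. \<forall>X\<in>A. M \<subseteq> X \<longrightarrow> X = M"
  proof (rule subset_Zorn')
    fix C assume ch: "subset.chain A C"
    then have sub: "C \<subseteq> A" and cmp: "\<And>X X'. X \<in> C \<Longrightarrow> X' \<in> C \<Longrightarrow> X \<subseteq> X' \<or> X' \<subseteq> X"
      unfolding subset.chain_def by auto
    show "\<Union>C \<in> A" unfolding A_def
    proof (intro CollectI ballI impI)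
      fix x x' assume x: "x \<in> \<Union>C" and x': "x' \<in> \<Union>C" and ne: "x \<noteq> x'"
      obtain X where X: "X \<in> C" "x \<in> X" using x by blast
      obtain X' where X': "X' \<in> C" "x' \<in> X'" using x' by blast
      show "e \<le> dist x x'"
      proof (cases "X \<subseteq> X'")
        case True
        then have "X' \<in> A" "x \<in> X'" "x' \<in> X'" using X X' sub by auto
        then show ?thesis using ne unfolding A_def by blast
      next
        case False
        then have "X' \<subseteq> X" using cmp X X' by blast
        then have "X \<in> A" "x \<in> X" "x' \<in> X" using X X' sub by auto
        then show ?thesis using ne unfolding A_def by blast
      qed
    qed
  qed
  then obtain M where M: "M \<in> A" and mx: "\<And>X. X \<in> A \<Longrightarrow> M \<subseteq> X \<Longrightarrow> X = M" by blast
  have "\<exists>x\<in>M. dist x y < e" for y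
  proof (rule ccontr)
    assume N: "\<not> (\<exists>x\<in>M. dist x y < e)"
    have "insert y M \<in> A" unfolding A_def
    proof (intro CollectI ballI impI)
      fix x x' assume x: "x \<in> insert y M" and x': "x' \<in> insert y M" and ne: "x \<noteq> x'"
      have MA: "\<forall>x\<in>M. \<forall>x'\<in>M. x \<noteq> x' \<longrightarrow> e \<le> dist x x'" using M unfolding A_def by blast
      show "e \<le> dist x x'"
      proof (cases "x = y")
        case True
        then have "x' \<in> M" using x' ne by blast
        then show ?thesis using N True by (simp add: dist_commute not_less)
      next
        case False
        then have xM: "x \<in> M" using x by blast
        show ?thesis
        proof (cases "x' = y")
          case True
          then show ?thesis using N xM by (simp add: not_less)
        next
          case False
          then have "x' \<in> M" using x' by blast
          then show ?thesis using MA xM ne by blast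
        qed
      qed
    qed
    then have "insert y M = M" using mx by blast
    then have "y \<in> M" by blast
    then show False using N \<open>e > 0\<close> by auto
  qed
  then show ?thesis using M unfolding A_def by blast
qed




lemma nonsep_uncountable:
  assumes "\<not> separable_space (euclidean :: 'a::metric_space topology)"
  shows "\<exists>e>0. \<exists>D::'a set. uncountable D \<and> (\<forall>x\<in>D. \<forall>x'\<in>D. x \<noteq> x' \<longrightarrow> e \<le> dist x x')"
proof (rule ccontr)
  assume H: "\<not> ?thesis"
  have "\<exists>D::'a set. (\<forall>x\<in>D. \<forall>x'\<in>D. x \<noteq> x' \<longrightarrow> 1 / real (Suc n) \<le> dist x x') \<and> (\<forall>y. \<exists>x\<in>D. dist x y < 1 / real (Suc n))" for n
    by (rule sep_maximal) auto
  then obtain DD :: "nat \<Rightarrow> 'a set" where DD: "\<And>n. (\<forall>x\<in>DD n. \<forall>x'\<in>DD n. x \<noteq> x' \<longrightarrow> 1 / real (Suc n) \<le> dist x x')"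
    "\<And>n y. \<exists>x\<in>DD n. dist x y < 1 / real (Suc n)" by metis
  have cD: "countable (DD n)" for n
  proof -
    have "1 / real (Suc n) > 0" by simp
    then show ?thesis using H DD(1)[of n] by blast
  qed
  have "closure (\<Union>n. DD n) = UNIV"
  proof (safe)
    fix y :: 'a
    show "y \<in> closure (\<Union>n. DD n)" unfolding closure_approachable
    proof (intro allI impI)
      fix r :: real assume "r > 0"
      then obtain n where n: "1 / real (Suc n) < r"
        by (metis nat_approx_posE)
      obtain x where "x \<in> DD n" "dist x y < 1 / real (Suc n)" using DD(2) by blast
      then show "\<exists>x\<in>\<Union>n. DD n. dist x y < r" using n by force
    qed
  qed auto
  then have "separable_space (euclidean :: 'a topology)"
    unfolding separable_space_def using cD by (intro exI[of _ "\<Union>n. DD n"]) auto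
  then show False using assms by blast
qed




lemma scaleK_mem: "(\<lambda>x. c * apply_bcontfun f x) \<in> bcontfun"
  for f :: "'a::topological_space \<Rightarrow>\<^sub>C 'k::real_normed_field"
proof (rule bcontfun_normI)
  show "continuous_on UNIV (\<lambda>x. c * apply_bcontfun f x)" by (intro continuous_intros) auto
  show "norm (c * apply_bcontfun f x) \<le> norm c * norm f" for x
    by (simp add: norm_mult mult_left_mono norm_bounded)
qed

lemma scaleK_apply[simp]: "apply_bcontfun (scaleK_bcontfun c f) x = c * apply_bcontfun f x"
  unfolding scaleK_bcontfun_def using scaleK_mem[of c f] by (simp add: Bcontfun_inverse)

lemma scaleK_norm: "norm (scaleK_bcontfun c f) = norm c * norm f"
  for f :: "'a::topological_space \<Rightarrow>\<^sub>C 'k::real_normed_field"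
proof (rule antisym)
  show "norm (scaleK_bcontfun c f) \<le> norm c * norm f"
    by (rule norm_bound) (simp add: norm_mult mult_left_mono norm_bounded)
  show "norm c * norm f \<le> norm (scaleK_bcontfun c f)"
  proof (cases "c = 0")
    case False
    have "norm f \<le> norm (inverse c) * norm (scaleK_bcontfun c f)"
    proof (rule norm_bound)
      fix x
      have "apply_bcontfun f x = inverse c * apply_bcontfun (scaleK_bcontfun c f) x" using False by simp
      then have "norm (apply_bcontfun f x) = norm (inverse c) * norm (apply_bcontfun (scaleK_bcontfun c f) x)"
        by (metis norm_mult)
      also have "\<dots> \<le> norm (inverse c) * norm (scaleK_bcontfun c f)"
        by (intro mult_left_mono norm_bounded) simp
      finally show "norm (apply_bcontfun f x) \<le> norm (inverse c) * norm (scaleK_bcontfun c f)" .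
    qed
    then have "norm c * norm f \<le> norm c * (norm (inverse c) * norm (scaleK_bcontfun c f))"
      by (simp add: mult_left_mono)
    also have "\<dots> = norm (scaleK_bcontfun c f)" using False
      by (simp add: norm_inverse)
    finally show ?thesis .
  qed simp
qed

lemma apply_sum_bcontfun: "apply_bcontfun (sum G S) y = (\<Sum>x\<in>S. apply_bcontfun (G x) y)"
  for G :: "'b \<Rightarrow> ('a::topological_space \<Rightarrow>\<^sub>C 'k::real_normed_vector)"
  by (induction S rule: infinite_finite_induct) auto

locale shiftop =
  fixes T :: "('a::metric_space \<Rightarrow>\<^sub>C 'k::{real_normed_field,banach}) \<Rightarrow> ('a \<Rightarrow>\<^sub>C 'k)"
  assumes sh: "isometric_shift T"
begin

lemma shU: "(\<forall>f g. T (f + g) = T f + T g) \<and>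
     (\<forall>c f. T (scaleK_bcontfun c f) = scaleK_bcontfun c (T f)) \<and>
     (\<forall>f. norm (T f) = norm f) \<and>
     (\<exists>g. g \<notin> range T \<and> (\<forall>f. \<exists>h c. f = T h + scaleK_bcontfun c g)) \<and>
     (\<Inter>n\<in>{1..}. range (T ^^ n)) = {0}"
  using sh unfolding isometric_shift_def .

lemma Tadd: "T (f + g) = T f + T g"
  using conjunct1[OF shU] by (rule spec2)
lemma Thom: "T (scaleK_bcontfun c f) = scaleK_bcontfun c (T f)"
  using conjunct1[OF conjunct2[OF shU]] by (rule spec2)
lemma Tnorm: "norm (T f) = norm f"
  using conjunct1[OF conjunct2[OF conjunct2[OF shU]]] by (rule spec)
lemma gex: "\<exists>g. g \<notin> range T \<and> (\<forall>f. \<exists>h c. f = T h + scaleK_bcontfun c g)"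
  using conjunct1[OF conjunct2[OF conjunct2[OF conjunct2[OF shU]]]] .
lemma Tcap: "(\<Inter>n\<in>{1..}. range (T ^^ n)) = {0}"
  using conjunct2[OF conjunct2[OF conjunct2[OF conjunct2[OF shU]]]] .

definition "g0 = (SOME g. g \<notin> range T \<and> (\<forall>f. \<exists>h c. f = T h + scaleK_bcontfun c g))"

lemma g0: "g0 \<notin> range T" "\<exists>h c. f = T h + scaleK_bcontfun c g0"
  using someI_ex[OF gex] unfolding g0_def by blast+

lemma T0: "T 0 = 0" using Tadd[of 0 0] by simp

lemma Tdiff: "T (f - g) = T f - T g"
  using Tadd[of "f - g" g] by (simp add: algebra_simps)

lemma Tinj: "T f = T g \<Longrightarrow> f = g"
  using Tnorm[of "f - g"] Tdiff[of f g] by simp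

lemma closed_range: "closed (range T)"
  unfolding closed_sequential_limits
proof (intro allI impI, elim conjE)
  fix x l assume xr: "\<forall>n. x n \<in> range T" and lim: "x \<longlonglongrightarrow> l"
  have "\<forall>n. \<exists>y. x n = T y" using xr by blast
  then obtain h where h: "\<And>n. x n = T (h n)" by metis
  have "Cauchy x" using lim by (rule LIMSEQ_imp_Cauchy)
  moreover have "dist (h m) (h n) = dist (x m) (x n)" for m n
    by (simp add: h dist_norm Tdiff[symmetric] Tnorm)
  ultimately have "Cauchy h" unfolding Cauchy_def by simp
  then obtain l' where l': "h \<longlonglongrightarrow> l'" using Cauchy_convergent_iff convergent_def by blast
  have "dist (x n) (T l') = dist (h n) l'" for n
    by (simp add: h dist_norm Tdiff[symmetric] Tnorm)
  then have "x \<longlonglongrightarrow> T l'" using l' by (simp add: tendsto_iff)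
  then have "l = T l'" using lim LIMSEQ_unique by blast
  then show "l \<in> range T" by blast
qed

lemma dpos: "\<exists>d>0. \<forall>h. d \<le> norm (g0 - T h)"
proof -
  have "open (- range T)" using closed_range by (simp add: closed_def)
  moreover have "g0 \<in> - range T" using g0 by blast
  ultimately obtain e where e: "e > 0" "\<forall>y. dist y g0 < e \<longrightarrow> y \<in> - range T"
    unfolding open_dist by blast
  have "e \<le> norm (g0 - T h)" for h
  proof -
    have "\<not> dist (T h) g0 < e" using e(2) by blast
    then have "e \<le> dist (T h) g0" by linarith
    also have "dist (T h) g0 = norm (g0 - T h)" by (simp add: dist_norm norm_minus_commute)
    finally show ?thesis .
  qed
  then show ?thesis using e by blast
qed

definition "dd = (SOME d. d > 0 \<and> (\<forall>h. d \<le> norm (g0 - T h)))"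

lemma dd: "dd > 0" "dd \<le> norm (g0 - T h)"
  using someI_ex[OF dpos] unfolding dd_def by blast+

lemma dec_unique:
  assumes "T h + scaleK_bcontfun c g0 = T h' + scaleK_bcontfun c' g0"
  shows "h = h' \<and> c = c'"
proof -
  have cc: "c = c'"
  proof (rule ccontr)
    assume ne: "c \<noteq> c'"
    have "g0 = T (scaleK_bcontfun (inverse (c' - c)) (h - h'))"
    proof (rule bcontfun_eqI)
      fix x
      have "apply_bcontfun (T h) x + c * g0 x = apply_bcontfun (T h') x + c' * g0 x"
        using arg_cong[OF assms, of "\<lambda>f. apply_bcontfun f x"] by simp
      then have "g0 x = inverse (c' - c) * (apply_bcontfun (T h) x - apply_bcontfun (T h') x)"
        using ne by (simp add: field_simps)
      then show "apply_bcontfun g0 x = apply_bcontfun (T (scaleK_bcontfun (inverse (c' - c)) (h - h'))) x"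
        by (simp add: Thom Tdiff)
    qed
    then show False using g0(1) by blast
  qed
  then have "T h = T h'" using assms by simp
  then show ?thesis using Tinj cc by blast
qed

definition "Dc f = (SOME p. f = T (fst p) + scaleK_bcontfun (snd p) g0)"
definition "R f = fst (Dc f)"
definition "C f = snd (Dc f)"

lemma decomp: "f = T (R f) + scaleK_bcontfun (C f) g0"
proof -
  obtain h c where "f = T h + scaleK_bcontfun c g0" using g0(2) by blast
  then have "\<exists>p. f = T (fst p) + scaleK_bcontfun (snd p) g0" by (intro exI[of _ "(h,c)"]) simp
  from someI_ex[OF this] show ?thesis unfolding R_def C_def Dc_def .
qed

lemma dec_eq: assumes "f = T h + scaleK_bcontfun c g0" shows "R f = h" "C f = c"
proof -
  have "T (R f) + scaleK_bcontfun (C f) g0 = T h + scaleK_bcontfun c g0"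
    by (rule trans[OF decomp[of f, symmetric] assms])
  then have "R f = h \<and> C f = c" by (rule dec_unique)
  then show "R f = h" "C f = c" by blast+
qed

lemma C_add: "C (f1 + f2) = C f1 + C f2" and R_add: "R (f1 + f2) = R f1 + R f2"
proof -
  have "f1 + f2 = (T (R f1) + scaleK_bcontfun (C f1) g0) + (T (R f2) + scaleK_bcontfun (C f2) g0)"
    by (rule arg_cong2[where f="(+)", OF decomp decomp])
  also have "\<dots> = T (R f1 + R f2) + scaleK_bcontfun (C f1 + C f2) g0"
    by (rule bcontfun_eqI) (simp add: Tadd algebra_simps)
  finally have "f1 + f2 = T (R f1 + R f2) + scaleK_bcontfun (C f1 + C f2) g0" .
  then show "C (f1 + f2) = C f1 + C f2" "R (f1 + f2) = R f1 + R f2" using dec_eq by blast+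
qed

lemma C_hom: "C (scaleK_bcontfun a f) = a * C f" and R_hom: "R (scaleK_bcontfun a f) = scaleK_bcontfun a (R f)"
proof -
  have "scaleK_bcontfun a f = scaleK_bcontfun a (T (R f) + scaleK_bcontfun (C f) g0)"
    by (rule arg_cong[OF decomp])
  also have "\<dots> = T (scaleK_bcontfun a (R f)) + scaleK_bcontfun (a * C f) g0"
    by (rule bcontfun_eqI) (simp add: Thom algebra_simps)
  finally have "scaleK_bcontfun a f = T (scaleK_bcontfun a (R f)) + scaleK_bcontfun (a * C f) g0" .
  then show "C (scaleK_bcontfun a f) = a * C f" "R (scaleK_bcontfun a f) = scaleK_bcontfun a (R f)"
    using dec_eq by blast+
qed

end




context shiftop begin

lemma C_bound: "norm (C f) * dd \<le> norm f"
proof (cases "C f = 0")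
  case False
  let ?c = "C f"
  let ?u = "scaleK_bcontfun (- inverse ?c) (R f)"
  have eq: "T (R f) + scaleK_bcontfun ?c g0 = scaleK_bcontfun ?c (g0 - T ?u)"
  proof (rule bcontfun_eqI)
    fix x
    show "apply_bcontfun (T (R f) + scaleK_bcontfun ?c g0) x = apply_bcontfun (scaleK_bcontfun ?c (g0 - T ?u)) x"
      using False by (simp add: Thom field_simps)
  qed
  have "f = scaleK_bcontfun ?c (g0 - T ?u)" using decomp[of f] eq by (rule trans)
  then have "norm f = norm ?c * norm (g0 - T ?u)" by (metis scaleK_norm)
  moreover have "dd \<le> norm (g0 - T ?u)" by (rule dd)
  ultimately show ?thesis by (simp add: mult_left_mono)
qed (simp add: dd)

definition "KK = 1 + norm g0 / dd"

lemma KK: "KK \<ge> 1" unfolding KK_def using dd by simp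

lemma R_bound: "norm (R f) \<le> KK * norm f"
proof -
  have "norm (R f) = norm (T (R f))" by (simp add: Tnorm)
  also have "T (R f) = f - scaleK_bcontfun (C f) g0" using decomp[of f] by (metis add_diff_cancel_right')
  also have "norm \<dots> \<le> norm f + norm (C f) * norm g0"
    by (metis norm_triangle_ineq4 scaleK_norm)
  also have "norm (C f) \<le> norm f / dd" using C_bound[of f] dd by (simp add: field_simps)
  then have "norm (C f) * norm g0 \<le> norm f / dd * norm g0" by (rule mult_right_mono) simp
  finally show ?thesis unfolding KK_def by (simp add: field_simps)
qed

lemma Rpow_bound: "norm ((R ^^ k) f) \<le> KK ^ k * norm f"
proof (induction k)
  case (Suc k)
  have "norm ((R ^^ Suc k) f) \<le> KK * norm ((R ^^ k) f)" by (simp add: R_bound)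
  also have "\<dots> \<le> KK * (KK ^ k * norm f)" using Suc KK by (simp add: mult_left_mono)
  finally show ?case by simp
qed simp

lemma Rpow_add: "(R ^^ k) (f + g) = (R ^^ k) f + (R ^^ k) g"
  by (induction k) (auto simp: R_add)

lemma Rpow_hom: "(R ^^ k) (scaleK_bcontfun a f) = scaleK_bcontfun a ((R ^^ k) f)"
  by (induction k) (auto simp: R_hom)

definition "cf k f = C ((R ^^ k) f)"

lemma cf_add: "cf k (f + g) = cf k f + cf k g"
  unfolding cf_def by (simp add: Rpow_add C_add)

lemma cf_hom: "cf k (scaleK_bcontfun a f) = a * cf k f"
  unfolding cf_def by (simp add: Rpow_hom C_hom)

lemma cf_bound: "norm (cf k f) \<le> (KK ^ k / dd) * norm f"
proof -
  have "norm (cf k f) * dd \<le> KK ^ k * norm f"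
    unfolding cf_def using C_bound[of "(R ^^ k) f"] Rpow_bound[of k f] by linarith
  then show ?thesis using dd by (simp add: field_simps)
qed

lemma cf_inj: assumes "\<And>k. cf k f = 0" shows "f = 0"
proof -
  have TR: "T (R y) = y" if "C y = 0" for y
  proof -
    have "T (R y) + scaleK_bcontfun (C y) g0 = T (R y)" by (rule bcontfun_eqI) (simp add: that)
    with decomp[of y] have "y = T (R y)" by (rule trans)
    then show ?thesis by (rule sym)
  qed
  have "f = (T ^^ n) ((R ^^ n) f)" for n
  proof (induction n)
    case (Suc n)
    have "(T ^^ Suc n) ((R ^^ Suc n) f) = (T ^^ n) (T (R ((R ^^ n) f)))"
      by (simp add: funpow_swap1)
    also have "T (R ((R ^^ n) f)) = (R ^^ n) f" using assms[of n] TR unfolding cf_def by blast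
    finally show ?case using Suc by simp
  qed simp
  then have "f \<in> (\<Inter>n\<in>{1..}. range (T ^^ n))" by (intro INT_I) (metis rangeI)
  then show ?thesis unfolding Tcap by simp
qed

end

lemma countable_support:
  fixes \<phi> :: "('a::topological_space \<Rightarrow>\<^sub>C 'k::real_normed_field) \<Rightarrow> 'k"
    and F :: "'b \<Rightarrow> ('a \<Rightarrow>\<^sub>C 'k)"
  assumes add: "\<And>f g. \<phi> (f + g) = \<phi> f + \<phi> g"
    and hom: "\<And>a f. \<phi> (scaleK_bcontfun a f) = a * \<phi> f"
    and bd: "\<And>f. norm (\<phi> f) \<le> B * norm f"
    and F1: "\<And>x y. x \<in> D \<Longrightarrow> norm (apply_bcontfun (F x) y) \<le> 1"
    and Fdisj: "\<And>x x' y. x \<in> D \<Longrightarrow> x' \<in> D \<Longrightarrow> apply_bcontfun (F x) y \<noteq> 0 \<Longrightarrow> apply_bcontfun (F x') y \<noteq> 0 \<Longrightarrow> x = x'"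
  shows "countable {x\<in>D. \<phi> (F x) \<noteq> 0}"
proof -
  have phi0: "\<phi> 0 = 0" using add[of 0 0] by simp
  have phisum: "\<phi> (sum G S) = (\<Sum>x\<in>S. \<phi> (G x))" for G :: "'b \<Rightarrow> _" and S
    by (induction S rule: infinite_finite_induct) (auto simp: phi0 add)
  define A where "A n = {x\<in>D. inverse (real (Suc n)) < norm (\<phi> (F x))}" for n
  have finA: "finite (A n)" for n
  proof (rule ccontr)
    assume "infinite (A n)"
    then obtain S where S: "finite S" "card S = nat (ceiling (B * real (Suc n))) + 1" "S \<subseteq> A n"
      using infinite_arbitrarily_large by blast
    define u where "u = (\<Sum>x\<in>S. scaleK_bcontfun (inverse (\<phi> (F x))) (F x))"
    have "\<phi> u = (\<Sum>x\<in>S. inverse (\<phi> (F x)) * \<phi> (F x))" unfolding u_def phisum hom ..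
    also have "\<dots> = (\<Sum>x\<in>S. 1)"
    proof (rule sum.cong[OF refl])
      fix x assume "x \<in> S"
      then have "inverse (real (Suc n)) < norm (\<phi> (F x))" using S(3) unfolding A_def by blast
      moreover have "inverse (real (Suc n)) > 0" by simp
      ultimately have "\<phi> (F x) \<noteq> 0" by auto
      then show "inverse (\<phi> (F x)) * \<phi> (F x) = 1" by simp
    qed
    finally have phiu: "\<phi> u = of_nat (card S)" by simp
    have "norm u \<le> real (Suc n)"
    proof (rule norm_bound)
      fix y
      have uy: "apply_bcontfun u y = (\<Sum>x\<in>S. inverse (\<phi> (F x)) * apply_bcontfun (F x) y)"
        unfolding u_def apply_sum_bcontfun by simp
      show "norm (apply_bcontfun u y) \<le> real (Suc n)"
      proof (cases "\<exists>x0\<in>S. apply_bcontfun (F x0) y \<noteq> 0")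
        case True
        then obtain x0 where x0: "x0 \<in> S" "apply_bcontfun (F x0) y \<noteq> 0" by blast
        have "apply_bcontfun u y = inverse (\<phi> (F x0)) * apply_bcontfun (F x0) y"
          unfolding uy
        proof (rule sum.remove[OF S(1) x0(1), THEN trans])
          have "(\<Sum>x\<in>S - {x0}. inverse (\<phi> (F x)) * apply_bcontfun (F x) y) = 0"
          proof (rule sum.neutral, rule ballI)
            fix x assume "x \<in> S - {x0}"
            then have xx: "x \<in> D" "x0 \<in> D" "x \<noteq> x0" using S(3) x0(1) unfolding A_def by auto
            have "apply_bcontfun (F x) y = 0"
            proof (rule ccontr)
              assume "apply_bcontfun (F x) y \<noteq> 0"
              from Fdisj[OF xx(1,2) this x0(2)] xx(3) show False by blast
            qed
            then show "inverse (\<phi> (F x)) * apply_bcontfun (F x) y = 0" by simp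
          qed
          then show "inverse (\<phi> (F x0)) * apply_bcontfun (F x0) y + (\<Sum>x\<in>S - {x0}. inverse (\<phi> (F x)) * apply_bcontfun (F x) y)
            = inverse (\<phi> (F x0)) * apply_bcontfun (F x0) y" by simp
        qed
        also have "norm \<dots> = inverse (norm (\<phi> (F x0))) * norm (apply_bcontfun (F x0) y)"
          by (simp add: norm_mult norm_inverse)
        also have "\<dots> \<le> inverse (norm (\<phi> (F x0))) * 1"
          using F1[of x0 y] x0 S(3) unfolding A_def by (intro mult_left_mono) auto
        also have "\<dots> \<le> real (Suc n)"
        proof -
          have "inverse (real (Suc n)) < norm (\<phi> (F x0))" using x0 S(3) unfolding A_def by blast
          then show ?thesis
            by (metis inverse_inverse_eq less_imp_inverse_less less_imp_le mult.right_neutral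
                of_nat_0_less_iff positive_imp_inverse_positive zero_less_Suc)
        qed
        finally show ?thesis by (simp add: uy)
      next
        case False
        then show ?thesis unfolding uy by simp
      qed
    qed
    have "real (card S) = norm (\<phi> u)" by (simp add: phiu)
    also have "\<dots> \<le> B * norm u" by (rule bd)
    also have "\<dots> \<le> max B 0 * norm u" by (rule mult_right_mono) simp_all
    also have "\<dots> \<le> max B 0 * real (Suc n)"
      using \<open>norm u \<le> real (Suc n)\<close> by (rule mult_left_mono) simp
    finally have "real (card S) \<le> max B 0 * real (Suc n)" .
    moreover have "max B 0 * real (Suc n) < real (card S)"
    proof (cases "B \<ge> 0")
      case True
      have "max B 0 * real (Suc n) = B * real (Suc n)" using True by simp
      also have "\<dots> \<le> real (nat (ceiling (B * real (Suc n))))" by (rule real_nat_ceiling_ge)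
      also have "\<dots> < real (card S)" using S(2) by simp
      finally show ?thesis .
    next
      case False
      then show ?thesis using S(2) by simp
    qed
    ultimately show False by simp
  qed
  have "{x\<in>D. \<phi> (F x) \<noteq> 0} \<subseteq> (\<Union>n. A n)"
  proof
    fix x assume "x \<in> {x\<in>D. \<phi> (F x) \<noteq> 0}"
    then have "x \<in> D" "norm (\<phi> (F x)) > 0" by auto
    then obtain n where "inverse (real (Suc n)) < norm (\<phi> (F x))"
      by (metis nat_approx_posE one_divide_eq_0_iff inverse_eq_divide)
    then show "x \<in> (\<Union>n. A n)" using \<open>x \<in> D\<close> unfolding A_def by blast
  qed
  moreover have "countable (\<Union>n. A n)" using finA by (simp add: countable_finite)
  ultimately show ?thesis using countable_subset by blast
qed




lemma shift_contra:
  fixes T :: "('a::metric_space \<Rightarrow>\<^sub>C 'k::{real_normed_field,banach}) \<Rightarrow> ('a \<Rightarrow>\<^sub>C 'k)"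
    and D :: "'a set"
  assumes sh: "isometric_shift T" and e: "e > 0" and unc: "uncountable D"
    and sep: "\<forall>x\<in>D. \<forall>x'\<in>D. x \<noteq> x' \<longrightarrow> e \<le> dist x x'"
  shows False
proof -
  interpret shiftop T using sh by unfold_locales
  define b where "b x y = max 0 (1 - 2 * dist x y / e)" for x y :: 'a
  have b01: "0 \<le> b x y \<and> b x y \<le> 1" for x y
    unfolding b_def using e by (simp add: divide_nonneg_pos)
  define F where "F x = Bcontfun (\<lambda>y. (of_real (b x y) :: 'k))" for x
  have mem: "(\<lambda>y. (of_real (b x y) :: 'k)) \<in> bcontfun" for x
  proof (rule bcontfun_normI)
    show "continuous_on UNIV (\<lambda>y. (of_real (b x y) :: 'k))"
      unfolding b_def using e by (intro continuous_intros) auto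
    show "norm (of_real (b x y) :: 'k) \<le> 1" for y using b01[of x y] by simp
  qed
  have Fapp: "apply_bcontfun (F x) y = of_real (b x y)" for x y
    unfolding F_def using mem[of x] by (simp add: Bcontfun_inverse)
  have F1: "norm (apply_bcontfun (F x) y) \<le> 1" for x y :: 'a using b01[of x y] by (simp add: Fapp)
  have Fdisj: "x = x'" if "x \<in> D" "x' \<in> D" "apply_bcontfun (F x) y \<noteq> 0" "apply_bcontfun (F x') y \<noteq> 0" for x x' y :: 'a
  proof -
    have nz: "b x y \<noteq> 0" "b x' y \<noteq> 0" using that by (auto simp: Fapp)
    have lt: "dist z y < e / 2" if "b z y \<noteq> 0" for z
    proof -
      have "0 < 1 - 2 * dist z y / e" using that unfolding b_def by (metis max_def order_le_less)
      then have "2 * dist z y / e < 1" by linarith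
      then have "2 * dist z y < e" using e by (simp add: divide_less_eq)
      then show ?thesis by linarith
    qed
    have "dist x x' \<le> dist x y + dist x' y" by (rule dist_triangle2)
    then have "dist x x' < e" using lt[OF nz(1)] lt[OF nz(2)] by linarith
    then show ?thesis using sep that by force
  qed
  have Fne: "F x \<noteq> 0" for x
  proof
    assume "F x = 0"
    then have "apply_bcontfun (F x) x = 0" by simp
    then show False by (simp add: Fapp b_def)
  qed
  have "D \<subseteq> (\<Union>k. {x\<in>D. cf k (F x) \<noteq> 0})"
  proof
    fix x assume "x \<in> D"
    have "\<not> (\<forall>k. cf k (F x) = 0)" using cf_inj[of "F x"] Fne[of x] by blast
    then obtain k where "cf k (F x) \<noteq> 0" by blast
    then show "x \<in> (\<Union>k. {x\<in>D. cf k (F x) \<noteq> 0})" using \<open>x \<in> D\<close> by blast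
  qed
  moreover have "countable {x\<in>D. cf k (F x) \<noteq> 0}" for k
  proof (rule countable_support[where B = "KK ^ k / dd"])
    show "cf k (f + g) = cf k f + cf k g" for f g by (rule cf_add)
    show "cf k (scaleK_bcontfun a f) = a * cf k f" for a f by (rule cf_hom)
    show "norm (cf k f) \<le> KK ^ k / dd * norm f" for f by (rule cf_bound)
    show "norm (apply_bcontfun (F x) y) \<le> 1" for x y by (rule F1)
    show "x = x'" if "x \<in> D" "x' \<in> D" "apply_bcontfun (F x) y \<noteq> 0" "apply_bcontfun (F x') y \<noteq> 0" for x x' y :: 'a
      using Fdisj that by blast
  qed
  then have "countable (\<Union>k. {x\<in>D. cf k (F x) \<noteq> 0})" by blast
  ultimately show False using unc countable_subset by blast
qed

theorem theorem1:
  fixes M_witness :: "'a::{metric_space, complete_space} itself"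
  assumes "(\<exists>T :: ('a \<Rightarrow>\<^sub>C real) \<Rightarrow> ('a \<Rightarrow>\<^sub>C real). isometric_shift T)
         \<or> (\<exists>T :: ('a \<Rightarrow>\<^sub>C complex) \<Rightarrow> ('a \<Rightarrow>\<^sub>C complex). isometric_shift T)"
  shows "separable_space (euclidean :: 'a topology)"
proof (rule ccontr)
  assume "\<not> ?thesis"
  then obtain e and D :: "'a set" where e: "e > 0" "uncountable D"
    "\<forall>x\<in>D. \<forall>x'\<in>D. x \<noteq> x' \<longrightarrow> e \<le> dist x x'"
    using nonsep_uncountable by blast
  from assms show False
  proof
    assume "\<exists>T :: ('a \<Rightarrow>\<^sub>C real) \<Rightarrow> ('a \<Rightarrow>\<^sub>C real). isometric_shift T"
    then obtain T :: "('a \<Rightarrow>\<^sub>C real) \<Rightarrow> ('a \<Rightarrow>\<^sub>C real)" where "isometric_shift T" by blast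
    then show False using shift_contra e by blast
  next
    assume "\<exists>T :: ('a \<Rightarrow>\<^sub>C complex) \<Rightarrow> ('a \<Rightarrow>\<^sub>C complex). isometric_shift T"
    then obtain T :: "('a \<Rightarrow>\<^sub>C complex) \<Rightarrow> ('a \<Rightarrow>\<^sub>C complex)" where "isometric_shift T" by blast
    then show False using shift_contra e by blast
  qed
qed


end
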